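(* Consider the nonlinear event-triggered setting described in the context, with a smooth class $\mathcal K_\infty$ function $\beta$, $\sigma\in(0,1)$ and $\theta\ge 0$, and execution times generated by the dynamic event generator. Then for all $t\in[0,t_\infty)$, $$\eta(t)+\theta\big(\sigma\alpha(\|x(t)\|)-\gamma(\|e(t)\|)\big)\ge 0\quad\text{and}\quad \eta(t)\ge 0.$$
   Context: Let $f:\mathbb{R}^n\times\mathbb{R}^m\to\mathbb{R}^n$ and a feedback $k:\mathbb{R}^n\to\mathbb{R}^m$ be given. A class $\mathcal K_\infty$ function is a continuous, strictly increasing $\alpha:[0,\infty)\to[0,\infty)$ with $\alpha(0)=0$ and $\alpha(r)\to\infty$ as $r\to\infty$. Assume there is a smooth $V:\mathbb{R}^n\to[0,\infty)$ and class $\mathcal K_\infty$ functions $\underline\alpha,\overline\alpha,\alpha,\gamma$ such that for all $x,e\in\mathbb{R}^n$: $\underline\alpha(\|x\|)\le V(x)\le\overline\alpha(\|x\|)$ and $\nabla V(x)\cdot f(x,k(x+e))\le-\alpha(\|x\|)+\gamma(\|e\|)$ (ISS-Lyapunov function for $\dot x=f(x,k(x+e))$). The plant is $\dot x=f(x,u)$ with sample-and-hold input $u(t)=k(x(t_i))$ for $t\in[t_i,t_{i+1})$, where $(t_i)_{i\in\mathbb I}$ is an increasing sequence of execution times; $e(t)=x(t_i)-x(t)$ for $t\in[t_i,t_{i+1})$, so $\dot x=f(x,k(x+e))$. If there are infinitely many executions, $\mathbb I=\mathbb N$ and $t_\infty=\lim t_i$; if finitely many ($\mathbb I=\{0,\dots,I\}$),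 $t_\infty=t_{I+1}=+\infty$. For a function $g$, $g(t^-)$ denotes the left limit at $t$. Dynamic event generator: with design parameters a smooth class $\mathcal K_\infty$ function $\beta$, $\sigma\in(0,1)$ and $\theta\ge0$, an internal variable $\eta$ satisfies $\dot\eta=-\beta(\eta)+\sigma\alpha(\|x\|)-\gamma(\|e\|)$, $\eta(0)=0$, and execution times are $t_0=0$, $t_{i+1}=\inf\{t>t_i:\ \eta(t)+\theta(\sigma\alpha(\|x(t)\|)-\gamma(\|e(t^-)\|))\le 0\}$. It is assumed that $x(t_i)\neq 0$ for all $i\in\mathbb I$. *)

theory Defs
  imports "HOL-Analysis.Analysis" "HOL-Library.Extended_Real"
begin

text \<open>Class K-infinity functions on [0,oo) (represented as real functions; values on
  negative reals are irrelevant).\<close>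
definition Kinf :: "(real \<Rightarrow> real) \<Rightarrow> bool" where
  "Kinf g \<longleftrightarrow> continuous_on {0..} g \<and> strict_mono_on {0..} g \<and> g 0 = 0
      \<and> (\<forall>r\<ge>0. g r \<ge> 0) \<and> filterlim g at_top at_top"

definition dirderiv :: "'a::real_normed_vector \<Rightarrow> ('a \<Rightarrow> real) \<Rightarrow> 'a \<Rightarrow> real" where
  "dirderiv v g x = deriv (\<lambda>h. g (x + h *\<^sub>R v)) 0"

definition smooth_fn :: "('a::euclidean_space \<Rightarrow> real) \<Rightarrow> bool" where
  "smooth_fn g \<longleftrightarrow> (\<forall>vs. set vs \<subseteq> Basis \<longrightarrow>
      continuous_on UNIV (foldr dirderiv vs g) \<and>
      (\<forall>v\<in>Basis. \<forall>x. (\<lambda>h. foldr dirderiv vs g (x + h *\<^sub>R v)) differentiable (at 0)))"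

definition grad :: "(real^'n \<Rightarrow> real) \<Rightarrow> real^'n \<Rightarrow> real^'n" where
  "grad g x = (\<chi> j. dirderiv (axis j 1) g x)"

definition exec_index :: "nat set \<Rightarrow> bool" where
  "exec_index I \<longleftrightarrow> I = UNIV \<or> (\<exists>N. I = {0..N})"

definition tnext :: "nat set \<Rightarrow> (nat \<Rightarrow> real) \<Rightarrow> nat \<Rightarrow> ereal" where
  "tnext I t i = (if Suc i \<in> I then ereal (t (Suc i)) else \<infinity>)"

definition tinf :: "nat set \<Rightarrow> (nat \<Rightarrow> real) \<Rightarrow> ereal" where
  "tinf I t = (if I = UNIV then lim (\<lambda>i. ereal (t i)) else \<infinity>)"

definition ival :: "nat set \<Rightarrow> (nat \<Rightarrow> real) \<Rightarrow> nat \<Rightarrow> real set" where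
  "ival I t i = {s. t i \<le> s \<and> ereal s < tnext I t i}"

end

theory Submission
  imports Defs
begin

lemma gronwall_contra:
  fixes \<eta> :: "real \<Rightarrow> real" and a b L :: real
  assumes ab: "a < b" and cont: "continuous_on {a..b} \<eta>" and ha: "\<eta> a \<ge> 0" and hb: "\<eta> b < 0"
    and S: "finite S"
    and der: "\<forall>x\<in>{a<..<b}-S. \<exists>d. (\<eta> has_real_derivative d) (at x) \<and> d \<ge> L * \<eta> x"
  shows False
proof -
  obtain D where D: "\<And>x. x\<in>{a<..<b}-S \<Longrightarrow> (\<eta> has_real_derivative D x) (at x) \<and> D x \<ge> L * \<eta> x"
    using der by metis
  define g where "g x = \<eta> x * exp (- L * x)" for x
  define G where "G x = (if x \<in> {a<..<b}-S then (D x - L * \<eta> x) * exp (- L * x) else 0)" for x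
  have "(G has_integral (g b - g a)) {a..b}"
  proof (rule fundamental_theorem_of_calculus_interior_strong[OF S])
    show "a \<le> b" using ab by simp
    show "continuous_on {a..b} g" unfolding g_def
      by (intro continuous_intros cont)
    fix x assume x: "x \<in> {a<..<b} - S"
    have dx: "(\<eta> has_real_derivative D x) (at x)" using D[OF x] by simp
    have ex: "((\<lambda>x. exp (- L * x)) has_real_derivative exp (- L * x) * (- L)) (at x)"
      by (auto intro!: derivative_eq_intros)
    have "((\<lambda>x. \<eta> x * exp (- L * x)) has_real_derivative
        (D x * exp (- L * x) + (exp (- L * x) * (- L)) * \<eta> x)) (at x)"
      by (rule DERIV_mult[OF dx ex])
    moreover have "D x * exp (- L * x) + (exp (- L * x) * (- L)) * \<eta> x = G x"
      using x by (simp add: G_def algebra_simps)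
    ultimately show "(g has_vector_derivative G x) (at x)"
      by (simp add: g_def[abs_def] has_real_derivative_iff_has_vector_derivative)
  qed
  moreover have "\<forall>x\<in>{a..b}. 0 \<le> G x" using D by (auto simp: G_def)
  ultimately have "0 \<le> g b - g a" by (metis has_integral_nonneg)
  moreover have "g a \<ge> 0" using ha by (simp add: g_def)
  moreover have "g b < 0" using hb by (simp add: g_def mult_neg_pos)
  ultimately show False by simp
qed

lemma beta_bound:
  fixes \<beta> :: "real \<Rightarrow> real"
  assumes "smooth_fn \<beta>" "\<beta> 0 = 0"
  shows "\<exists>\<delta>>0. \<exists>L. \<forall>y. \<bar>y\<bar> < \<delta> \<longrightarrow> \<bar>\<beta> y\<bar> \<le> L * \<bar>y\<bar>"
proof -
  have "(\<lambda>h. foldr dirderiv [] \<beta> (0 + h *\<^sub>R 1)) differentiable (at 0)"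
    using assms(1) unfolding smooth_fn_def by (metis Basis_real_def empty_subsetI insertI1 list.set(1))
  hence "\<beta> differentiable (at 0)" by simp
  then obtain D where "(\<beta> has_real_derivative D) (at 0)" using real_differentiable_def by blast
  hence "((\<lambda>y. (\<beta> y - \<beta> 0) / (y - 0)) \<longlongrightarrow> D) (at 0)" by (simp add: has_field_derivative_iff)
  hence "\<forall>\<^sub>F y in at 0. dist (\<beta> y / y) D < 1" using assms(2) by (simp add: tendsto_iff)
  then obtain d where d: "d > 0" "\<And>y. y \<noteq> 0 \<Longrightarrow> dist y 0 < d \<Longrightarrow> dist (\<beta> y / y) D < 1"
    by (auto simp: eventually_at)
  have "\<forall>y. \<bar>y\<bar> < d \<longrightarrow> \<bar>\<beta> y\<bar> \<le> (\<bar>D\<bar> + 1) * \<bar>y\<bar>"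
  proof (intro allI impI)
    fix y :: real assume y: "\<bar>y\<bar> < d"
    show "\<bar>\<beta> y\<bar> \<le> (\<bar>D\<bar> + 1) * \<bar>y\<bar>"
    proof (cases "y = 0")
      case True thus ?thesis using assms(2) by simp
    next
      case False
      hence "\<bar>\<beta> y / y - D\<bar> < 1" using d(2)[of y] y by (simp add: dist_real_def)
      hence "\<bar>\<beta> y / y\<bar> \<le> \<bar>D\<bar> + 1" by linarith
      moreover have "\<beta> y = (\<beta> y / y) * y" using False by simp
      hence "\<bar>\<beta> y\<bar> = \<bar>\<beta> y / y\<bar> * \<bar>y\<bar>" by (metis abs_mult)
      ultimately show ?thesis by (metis mult_right_mono abs_ge_zero)
    qed
  qed
  thus ?thesis using d(1) by blast
qed

theorem lemma1:
  fixes f :: "real^'n \<Rightarrow> real^'m \<Rightarrow> real^'n"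
    and k :: "real^'n \<Rightarrow> real^'m"
    and V :: "real^'n \<Rightarrow> real"
    and \<alpha>l \<alpha>u \<alpha> \<gamma> \<beta> :: "real \<Rightarrow> real"
    and \<sigma> \<theta> :: real
    and I :: "nat set" and t :: "nat \<Rightarrow> real"
    and x e :: "real \<Rightarrow> real^'n" and \<eta> :: "real \<Rightarrow> real"
  assumes V_smooth: "smooth_fn V"
    and V_nonneg: "\<forall>z. V z \<ge> 0"
    and K: "Kinf \<alpha>l" "Kinf \<alpha>u" "Kinf \<alpha>" "Kinf \<gamma>"
    and V_bounds: "\<forall>z. \<alpha>l (norm z) \<le> V z \<and> V z \<le> \<alpha>u (norm z)"
    and ISS: "\<forall>z w. grad V z \<bullet> f z (k (z + w)) \<le> - \<alpha> (norm z) + \<gamma> (norm w)"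
    and \<beta>: "smooth_fn \<beta>" "Kinf \<beta>"
    and \<sigma>: "0 < \<sigma>" "\<sigma> < 1"
    and \<theta>: "0 \<le> \<theta>"
    and I: "exec_index I"
    and t0: "t 0 = 0"
    and t_incr: "\<forall>i. Suc i \<in> I \<longrightarrow> t i < t (Suc i)"
    and x_cont: "continuous_on {s. 0 \<le> s \<and> ereal s < tinf I t} x"
    and x_ode: "\<forall>i\<in>I. \<forall>s\<in>ival I t i.
        (x has_vector_derivative f (x s) (k (x (t i)))) (at s within ival I t i)"
    and e_def: "\<forall>i\<in>I. \<forall>s\<in>ival I t i. e s = x (t i) - x s"
    and \<eta>_cont: "continuous_on {s. 0 \<le> s \<and> ereal s < tinf I t} \<eta>"
    and \<eta>0: "\<eta> 0 = 0"
    and \<eta>_ode: "\<forall>i\<in>I. \<forall>s\<in>ival I t i.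
        (\<eta> has_real_derivative (- \<beta> (\<eta> s) + \<sigma> * \<alpha> (norm (x s)) - \<gamma> (norm (e s))))
          (at s within ival I t i)"
    and trigger: "\<forall>i\<in>I. tnext I t i = Inf (ereal ` {s. t i < s \<and> ereal s < tinf I t \<and>
        \<eta> s + \<theta> * (\<sigma> * \<alpha> (norm (x s)) - \<gamma> (norm (Lim (at_left s) e))) \<le> 0})"
    and x_nz: "\<forall>i\<in>I. x (t i) \<noteq> 0"
  shows "\<forall>s. 0 \<le> s \<and> ereal s < tinf I t \<longrightarrow>
      \<eta> s + \<theta> * (\<sigma> * \<alpha> (norm (x s)) - \<gamma> (norm (e s))) \<ge> 0 \<and> \<eta> s \<ge> 0"
proof -
  have I0: "0 \<in> I" and Idown: "\<And>i j. j \<in> I \<Longrightarrow> i \<le> j \<Longrightarrow> i \<in> I"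
    using I unfolding exec_index_def by auto
  have mono: "t i < t j" if "j \<in> I" "i < j" for i j
    using that
  proof (induction j)
    case 0 thus ?case by simp
  next
    case (Suc j)
    have jI: "j \<in> I" using Idown[OF Suc.prems(1)] by simp
    have "t j < t (Suc j)" using t_incr Suc.prems(1) by auto
    show ?case
    proof (cases "i = j")
      case True thus ?thesis using \<open>t j < t (Suc j)\<close> by simp
    next
      case False
      hence "i < j" using Suc.prems(2) by simp
      thus ?thesis using Suc.IH[OF jI] \<open>t j < t (Suc j)\<close> by simp
    qed
  qed
  have mono_le: "t i \<le> t j" if "j \<in> I" "i \<le> j" for i j
    using mono[OF that(1)] that(2) by (cases "i = j") (auto intro: less_imp_le)
  have tpos: "t i \<ge> 0" if "i \<in> I" for i using mono_le[OF that, of 0] t0 by simp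
  define D where "D = {s. 0 \<le> s \<and> ereal s < tinf I t}"
  have tinf_U: "tinf I t = (SUP i. ereal (t i))" if U: "I = UNIV"
  proof -
    have "incseq (\<lambda>i. ereal (t i))"
      by (rule incseq_SucI) (use t_incr U in \<open>auto intro: less_imp_le\<close>)
    hence "(\<lambda>i. ereal (t i)) \<longlonglongrightarrow> (SUP i. ereal (t i))" by (rule LIMSEQ_SUP)
    thus ?thesis using U unfolding tinf_def by (simp add: limI)
  qed
  have tnext_le: "tnext I t i \<le> tinf I t" if "i \<in> I" for i
  proof (cases "I = UNIV")
    case True thus ?thesis using tinf_U unfolding tnext_def by (auto intro: SUP_upper)
  next
    case False thus ?thesis unfolding tinf_def by simp
  qed
  have ti_lt: "ereal (t i) < tnext I t i" if "i \<in> I" for i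
    using t_incr unfolding tnext_def by auto
  have ival_D: "ival I t i \<subseteq> D" if "i \<in> I" for i
    using tpos[OF that] tnext_le[OF that] unfolding ival_def D_def
    by (auto intro: order_trans less_le_trans)
  have fin: "finite {i\<in>I. t i \<le> b}" if "b \<in> D" for b
  proof (cases "I = UNIV")
    case True
    hence "ereal b < (SUP i. ereal (t i))" using that tinf_U unfolding D_def by simp
    then obtain j where j: "ereal b < ereal (t j)" by (auto simp: less_SUP_iff)
    have "{i\<in>I. t i \<le> b} \<subseteq> {..<j}"
    proof
      fix i assume "i \<in> {i\<in>I. t i \<le> b}"
      hence "t i \<le> b" by simp
      moreover have "j \<le> i \<Longrightarrow> t j \<le> t i" using mono_le True by simp
      ultimately show "i \<in> {..<j}" using j by fastforce
    qed
    thus ?thesis by (rule finite_subset) simp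
  next
    case False
    then obtain N where "I = {0..N}" using I unfolding exec_index_def by auto
    thus ?thesis by simp
  qed
  have cover: "\<exists>i\<in>I. t i \<le> s \<and> ereal s < tnext I t i" if "s \<in> D" for s
  proof -
    define J where "J = {i\<in>I. t i \<le> s}"
    have finJ: "finite J" using fin[OF that] unfolding J_def .
    have "0 \<in> J" using I0 t0 that unfolding J_def D_def by simp
    hence ne: "J \<noteq> {}" by auto
    define i where "i = Max J"
    have iJ: "i \<in> J" using Max_in[OF finJ ne] unfolding i_def .
    have "ereal s < tnext I t i"
    proof (cases "Suc i \<in> I")
      case True
      have "\<not> t (Suc i) \<le> s"
      proof
        assume "t (Suc i) \<le> s"
        hence "Suc i \<in> J" using True unfolding J_def by simp
        hence "Suc i \<le> i" using Max_ge[OF finJ] unfolding i_def by simp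
        thus False by simp
      qed
      thus ?thesis using True unfolding tnext_def by simp
    next
      case False thus ?thesis unfolding tnext_def by simp
    qed
    thus ?thesis using iJ unfolding J_def by auto
  qed
  have nbhd: "\<exists>c. s < c \<and> {t i<..<c} \<subseteq> ival I t i"
    if "i \<in> I" "t i < s" "ereal s < tnext I t i" for i s
  proof -
    define c where "c = (if Suc i \<in> I then t (Suc i) else s + 1)"
    have "s < c" using that(3) unfolding c_def tnext_def by (auto split: if_splits)
    moreover have "{t i<..<c} \<subseteq> ival I t i"
      unfolding ival_def tnext_def c_def by auto
    ultimately show ?thesis by blast
  qed
  have int_pt: "s \<in> interior (ival I t i)"
    if h: "i \<in> I" "t i < s" "ereal s < tnext I t i" for i s
  proof -
    obtain c where c: "s < c" "{t i<..<c} \<subseteq> ival I t i" using nbhd[OF h] by blast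
    have "{t i<..<c} \<subseteq> interior (ival I t i)" by (rule interior_maximal[OF c(2)]) simp
    thus ?thesis using c(1) h(2) by auto
  qed
  have P1: "\<eta> s + \<theta> * (\<sigma> * \<alpha> (norm (x s)) - \<gamma> (norm (e s))) > 0"
    if iI: "i \<in> I" and s1: "t i < s" and s2: "ereal s < tnext I t i" for i s
  proof -
    obtain c where c: "s < c" "{t i<..<c} \<subseteq> ival I t i" using nbhd[OF iI s1 s2] by blast
    have sival: "s \<in> ival I t i" using s1 s2 unfolding ival_def by simp
    have sD: "s \<in> D" using ival_D[OF iI] sival by blast
    have "continuous_on {t i<..<c} x"
      using ival_D[OF iI] c(2) unfolding D_def by (intro continuous_on_subset[OF x_cont]) auto
    hence "isCont x s" using continuous_on_eq_continuous_at[of "{t i<..<c}" x] c(1) s1 by auto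
    hence "(x \<longlongrightarrow> x s) (at s)" by (simp add: isCont_def)
    hence "((\<lambda>y. x (t i) - x y) \<longlongrightarrow> x (t i) - x s) (at s)" by (intro tendsto_intros)
    hence lim1: "((\<lambda>y. x (t i) - x y) \<longlongrightarrow> x (t i) - x s) (at_left s)"
      by (simp add: filterlim_at_split)
    have ev: "eventually (\<lambda>y. x (t i) - x y = e y) (at_left s)"
    proof -
      have "eventually (\<lambda>y. y \<in> {t i<..<s}) (at_left s)" using eventually_at_left_real s1 by blast
      thus ?thesis
      proof (rule eventually_mono)
        fix y assume "y \<in> {t i<..<s}"
        hence "ereal y < ereal s" by simp
        moreover have "ereal s < tnext I t i" using s2 .
        ultimately have "ereal y < tnext I t i" by (rule less_trans)
        moreover have "t i \<le> y" using \<open>y \<in> {t i<..<s}\<close> by simp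
        ultimately have "y \<in> ival I t i" unfolding ival_def by simp
        thus "x (t i) - x y = e y" using e_def iI by auto
      qed
    qed
    have es: "e s = x (t i) - x s" using e_def iI sival by auto
    have "(e \<longlongrightarrow> e s) (at_left s)" using Lim_transform_eventually[OF lim1 ev] es by simp
    hence LimE: "Lim (at_left s) e = e s" by (intro tendsto_Lim) auto
    show ?thesis
    proof (rule ccontr)
      assume "\<not> ?thesis"
      hence "ereal s \<in> ereal ` {s. t i < s \<and> ereal s < tinf I t \<and>
        \<eta> s + \<theta> * (\<sigma> * \<alpha> (norm (x s)) - \<gamma> (norm (Lim (at_left s) e))) \<le> 0}"
        using LimE s1 sD unfolding D_def by auto
      hence "Inf (ereal ` {s. t i < s \<and> ereal s < tinf I t \<and>
        \<eta> s + \<theta> * (\<sigma> * \<alpha> (norm (x s)) - \<gamma> (norm (Lim (at_left s) e))) \<le> 0}) \<le> ereal s"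
        by (rule Inf_lower)
      hence "tnext I t i \<le> ereal s" using trigger iI by simp
      thus False using s2 by simp
    qed
  qed
  have e_ti: "e (t i) = 0" if "i \<in> I" for i
    using e_def that ti_lt[OF that] unfolding ival_def by auto
  have der_int: "(\<eta> has_real_derivative (- \<beta> (\<eta> s) + \<sigma> * \<alpha> (norm (x s)) - \<gamma> (norm (e s)))) (at s)"
    if "i \<in> I" "t i < s" "ereal s < tnext I t i" for i s
  proof -
    have sival: "s \<in> ival I t i" using that unfolding ival_def by simp
    have "(\<eta> has_real_derivative (- \<beta> (\<eta> s) + \<sigma> * \<alpha> (norm (x s)) - \<gamma> (norm (e s))))
        (at s within ival I t i)" using \<eta>_ode that(1) sival by blast
    thus ?thesis using at_within_interior[OF int_pt[OF that]] by simp
  qed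
  have Kb: "\<beta> 0 = 0" "\<gamma> 0 = 0" "\<And>r. r \<ge> 0 \<Longrightarrow> \<alpha> r \<ge> 0"
    using \<beta>(2) K(4) K(3) unfolding Kinf_def by auto
  obtain \<delta> L where \<delta>: "\<delta> > 0" and bL: "\<And>y. \<bar>y\<bar> < \<delta> \<Longrightarrow> \<bar>\<beta> y\<bar> \<le> L * \<bar>y\<bar>"
    using beta_bound[OF \<beta>(1) Kb(1)] by blast
  have etapos: "\<eta> s \<ge> 0" if sD: "s \<in> D" for s
  proof (rule ccontr)
    assume "\<not> ?thesis"
    hence neg1: "\<eta> s < 0" by simp
    have s0le: "0 \<le> s" using sD unfolding D_def by simp
    have subD: "{0..s} \<subseteq> D"
    proof
      fix y assume y: "y \<in> {0..s}"
      hence "ereal y \<le> ereal s" by simp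
      moreover have "ereal s < tinf I t" using sD unfolding D_def by simp
      ultimately have "ereal y < tinf I t" by (rule le_less_trans)
      thus "y \<in> D" using y unfolding D_def by simp
    qed
    have ct: "continuous_on {0..s} \<eta>" using subD unfolding D_def
      by (intro continuous_on_subset[OF \<eta>_cont]) auto
    define A where "A = {y \<in> {0..s}. (\<lambda>_. 0) y \<le> \<eta> y}"
    have clA: "closed A" unfolding A_def
      by (rule continuous_on_closed_Collect_le[OF continuous_on_const ct]) simp
    have A0: "0 \<in> A" using \<eta>0 s0le unfolding A_def by simp
    have bddA: "bdd_above A" unfolding A_def by (rule bdd_aboveI[of _ s]) auto
    define s0 where "s0 = Sup A"
    have s0A: "s0 \<in> A" unfolding s0_def using closed_contains_Sup[OF _ bddA clA] A0 by blast
    have negs: "\<eta> y < 0" if "s0 < y" "y \<le> s" for y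
    proof (rule ccontr)
      assume "\<not> \<eta> y < 0"
      hence "y \<in> A" using that s0A unfolding A_def by auto
      hence "y \<le> s0" unfolding s0_def by (rule cSup_upper[OF _ bddA])
      thus False using that by simp
    qed
    have s0s: "s0 < s" using s0A neg1 unfolding A_def by (cases "s0 = s") auto
    have es0: "\<eta> s0 \<ge> 0" and s0pos: "0 \<le> s0" using s0A unfolding A_def by auto
    obtain d where d: "d > 0" "\<And>y. y \<in> {0..s} \<Longrightarrow> dist y s0 < d \<Longrightarrow> dist (\<eta> y) (\<eta> s0) < \<delta>"
      using ct \<delta> s0A unfolding continuous_on_iff A_def by blast
    define s2 where "s2 = min s (s0 + d/2)"
    have s2: "s0 < s2" "s2 \<le> s" using s0s d(1) unfolding s2_def by auto
    have near: "\<eta> y > - \<delta>" if "s0 \<le> y" "y \<le> s2" for y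
    proof -
      have "dist (\<eta> y) (\<eta> s0) < \<delta>" using d(2)[of y] that s2 s0pos d(1) unfolding s2_def
        by (auto simp: dist_real_def)
      thus ?thesis using es0 by (simp add: dist_real_def)
    qed
    have s2D: "s2 \<in> D" using subD s2 s0pos by auto
    show False
    proof (rule gronwall_contra[of s0 s2 \<eta> "t ` {i\<in>I. t i \<le> s2}" L])
      show "s0 < s2" by (rule s2(1))
      show "continuous_on {s0..s2} \<eta>" using s2 s0pos by (intro continuous_on_subset[OF ct]) auto
      show "0 \<le> \<eta> s0" by (rule es0)
      show "\<eta> s2 < 0" using negs s2 by simp
      show "finite (t ` {i \<in> I. t i \<le> s2})" using fin[OF s2D] by simp
      show "\<forall>y\<in>{s0<..<s2} - t ` {i \<in> I. t i \<le> s2}.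
          \<exists>d. (\<eta> has_real_derivative d) (at y) \<and> L * \<eta> y \<le> d"
      proof
        fix y assume y: "y \<in> {s0<..<s2} - t ` {i \<in> I. t i \<le> s2}"
        have yD: "y \<in> D" using subD y s2 s0pos by auto
        obtain i where i: "i \<in> I" "t i \<le> y" "ereal y < tnext I t i" using cover[OF yD] by blast
        have "t i \<noteq> y" using y i by auto
        hence tiy: "t i < y" using i by simp
        have ny: "\<eta> y < 0" "\<eta> y > - \<delta>" using negs near y s2 by auto
        hence "\<bar>\<eta> y\<bar> < \<delta>" by simp
        hence "\<bar>\<beta> (\<eta> y)\<bar> \<le> L * \<bar>\<eta> y\<bar>" by (rule bL)
        hence b1: "- \<beta> (\<eta> y) \<ge> L * \<eta> y" using ny by (simp add: abs_if split: if_splits)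
        have p1: "\<eta> y + \<theta> * (\<sigma> * \<alpha> (norm (x y)) - \<gamma> (norm (e y))) > 0"
          using P1[OF i(1) tiy i(3)] .
        have b2: "\<sigma> * \<alpha> (norm (x y)) - \<gamma> (norm (e y)) \<ge> 0"
        proof (cases "\<theta> = 0")
          case True thus ?thesis using p1 ny by simp
        next
          case False
          hence "\<theta> > 0" using \<theta> by simp
          moreover have "\<theta> * (\<sigma> * \<alpha> (norm (x y)) - \<gamma> (norm (e y))) > 0" using p1 ny by linarith
          ultimately show ?thesis by (simp add: zero_less_mult_iff)
        qed
        show "\<exists>d. (\<eta> has_real_derivative d) (at y) \<and> L * \<eta> y \<le> d"
          using der_int[OF i(1) tiy i(3)] b1 b2 by fastforce
      qed
    qed
  qed
  show ?thesis
  proof (intro allI impI)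
    fix s assume "0 \<le> s \<and> ereal s < tinf I t"
    hence sD: "s \<in> D" unfolding D_def by simp
    obtain i where i: "i \<in> I" "t i \<le> s" "ereal s < tnext I t i" using cover[OF sD] by blast
    have "\<eta> s + \<theta> * (\<sigma> * \<alpha> (norm (x s)) - \<gamma> (norm (e s))) \<ge> 0"
    proof (cases "t i = s")
      case True
      hence "e s = 0" using e_ti[OF i(1)] by simp
      hence "\<theta> * (\<sigma> * \<alpha> (norm (x s)) - \<gamma> (norm (e s))) \<ge> 0"
        using Kb \<theta> \<sigma> by simp
      thus ?thesis using etapos[OF sD] by simp
    next
      case False
      thus ?thesis using P1[OF i(1) _ i(3)] i(2) by fastforce
    qed
    thus "0 \<le> \<eta> s + \<theta> * (\<sigma> * \<alpha> (norm (x s)) - \<gamma> (norm (e s))) \<and> 0 \<le> \<eta> s"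
      using etapos[OF sD] by simp
  qed
qed

end
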